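(* Fix a real number $\alpha>1$ and consider the family $f_a(x)=-|x|^{\alpha}+a$, $a\in\mathbb{R}$. Restrict to parameters $a>1$ for which the rescaled post-critical orbit satisfies $2_a\in(-1,0)$, $3_a\in(0,1)$ and $4_a$ lies strictly between $2_a$ and $-2_a$. For such parameters put $t=p_{1,-1}(2_a)>0$ and $g(t)=p_{2_a,-2_a}(4_a)$. Then the inverse function $g^{-1}\colon\mathbb{R}\to\mathbb{R}_+$ is strictly increasing, and $g'(t)>1$. In particular, the value $g(t)=0$, i.e. $4_a=0$ (the super-stable orbit with kneading sequence $RLRC$), is assumed for only one parameter.
   Context: Poincaré coordinates: for real $p\neq q$ and $x$ strictly between $p$ and $q$ (the oriented open interval $(p,q)$, where $p>q$ is allowed), $p_{p,q}(x)=\ln\frac{x-p}{q-x}$. Rescaled orbit: for $n\ge0$ write $n_a=f_a^n(0)/f_a(0)$ (so $0_a=0$, $1_a=1$), i.e. $n_a$ is the $n$-th iterate of $0$ under $x\mapsto 1-a^{\alpha-1}|x|^{\alpha}$. The kneading sequence $RLRC$ means $1_a>0$, $2_a<0$, $3_a>0$, $4_a=0$. *)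

theory Defs
  imports "HOL-Analysis.Analysis"
begin

definition poincare :: "real \<Rightarrow> real \<Rightarrow> real \<Rightarrow> real" where
  "poincare p q x = ln ((x - p) / (q - x))"

text \<open>Rescaled orbit n_a = f_a^n(0) / f_a(0): the n-th iterate of 0 under
  x |-> 1 - a^(alpha-1) |x|^alpha.\<close>
definition rorb :: "real \<Rightarrow> real \<Rightarrow> nat \<Rightarrow> real" where
  "rorb \<alpha> a n = ((\<lambda>x. 1 - a powr (\<alpha> - 1) * \<bar>x\<bar> powr \<alpha>) ^^ n) 0"

definition admissible :: "real \<Rightarrow> real \<Rightarrow> bool" where
  "admissible \<alpha> a \<longleftrightarrow> a > 1
     \<and> -1 < rorb \<alpha> a 2 \<and> rorb \<alpha> a 2 < 0
     \<and> 0 < rorb \<alpha> a 3 \<and> rorb \<alpha> a 3 < 1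
     \<and> rorb \<alpha> a 2 < rorb \<alpha> a 4 \<and> rorb \<alpha> a 4 < - rorb \<alpha> a 2"

definition tpar :: "real \<Rightarrow> real \<Rightarrow> real" where
  "tpar \<alpha> a = poincare 1 (-1) (rorb \<alpha> a 2)"

definition Tset :: "real \<Rightarrow> real set" where
  "Tset \<alpha> = tpar \<alpha> ` {a. admissible \<alpha> a}"

definition apar :: "real \<Rightarrow> real \<Rightarrow> real" where
  "apar \<alpha> t = (THE a. admissible \<alpha> a \<and> tpar \<alpha> a = t)"

definition gfun :: "real \<Rightarrow> real \<Rightarrow> real" where
  "gfun \<alpha> t = (let a = apar \<alpha> t in
     poincare (rorb \<alpha> a 2) (- rorb \<alpha> a 2) (rorb \<alpha> a 4))"

end

theory Submission
  imports Defs
begin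

lemma my_ln: "DERIV f x :> D \<Longrightarrow> 0 < f x \<Longrightarrow> DERIV (\<lambda>x. ln (f x)) x :> D / f x"
  for f :: "real \<Rightarrow> real"
  using DERIV_chain2[OF DERIV_ln_divide, of f x D] by simp

lemma gen2: "(0 - a*(u/(1-s1))*(-d))/(1-u) - a*((0-d)/(1-s1)) + (0-1)/(1-x) - 1/x
        = a*d/((1-s1)*(1-u)) - 1/(x*(1-x))" if "s1 < 1" "u < 1" "0 < x" "x < 1" for a d s1 u x :: real
proof -
  have g: "(a*((1-B)/A)*d)/B + a*d/A = a*d/(A*B)" if "A \<noteq> 0" "B \<noteq> 0" for A B :: real
    using that by (simp add: field_simps)
  have g2: "-1/B - 1/(1-B) = - (1/((1-B)*B))" if "1-B \<noteq> 0" "B \<noteq> 0" for B :: real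
    using that by (simp add: field_simps)
  have "(0 - a*(u/(1-s1))*(-d))/(1-u) - a*((0-d)/(1-s1)) = a*d/((1-s1)*(1-u))"
    using g[of "1-s1" "1-u"] that by simp
  moreover have "(0-1)/(1-x) - 1/x = - (1/(x*(1-x)))" using g2[of "1-x"] that by (simp add: mult.commute)
  ultimately show ?thesis by simp
qed


lemma ev_lt: "isCont f x \<Longrightarrow> f x < c \<Longrightarrow> eventually (\<lambda>y. f y < c) (nhds x)" for f :: "real \<Rightarrow> real"
  by (metis isCont_def tendsto_at_iff_tendsto_nhds order_tendstoD(2))
lemma ev_gt: "isCont f x \<Longrightarrow> c < f x \<Longrightarrow> eventually (\<lambda>y. c < f y) (nhds x)" for f :: "real \<Rightarrow> real"
  by (metis isCont_def tendsto_at_iff_tendsto_nhds order_tendstoD(1))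

context fixes \<alpha> :: real assumes al: "1 < \<alpha>" begin

definition sf :: "real \<Rightarrow> real" where "sf e = (1+e) * e powr \<alpha>"
definition sd :: "real \<Rightarrow> real" where "sd e = e powr \<alpha> + (1+e) * (\<alpha> * e powr (\<alpha>-1))"
definition uf :: "real \<Rightarrow> real" where "uf e = (1 - sf e) powr \<alpha>"
definition Lf :: "real \<Rightarrow> real" where "Lf e = ln (1 - uf e) - \<alpha> * ln (1 - sf e) + ln (1-e) - ln e"
definition Ld :: "real \<Rightarrow> real" where "Ld e = \<alpha> * sd e / ((1 - sf e)*(1 - uf e)) - 1/(e*(1-e))"
definition qf :: "real \<Rightarrow> real" where "qf e = (1 - uf e)*(1-e)/(e * uf e)"
definition Sset :: "real set" where "Sset = {e. 0<e \<and> e<1 \<and> sf e < 1}"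

lemma bern: assumes "0 < x" "x \<le> 1" shows "1 + \<alpha>*(x-1) \<le> x powr \<alpha>"
proof -
  have "(\<lambda>y. y powr \<alpha> - \<alpha>*y) 1 \<le> (\<lambda>y. y powr \<alpha> - \<alpha>*y) x"
  proof (rule DERIV_nonpos_imp_nonincreasing[OF assms(2)])
    fix y assume y0: "x \<le> y" "y \<le> 1"
    hence y: "x \<le> y \<and> y \<le> 1" by simp
    hence yp: "y > 0" using assms by auto
    have "((\<lambda>y. y powr \<alpha> - \<alpha>*y) has_real_derivative \<alpha> * y powr (\<alpha>-1) - \<alpha>) (at y)"
      by (rule derivative_eq_intros has_real_derivative_powr yp refl | simp)+
    moreover have "y powr (\<alpha>-1) \<le> 1" using y yp al by (simp add: powr_le1)
    hence "\<alpha> * y powr (\<alpha>-1) - \<alpha> \<le> 0" using al by (simp add: mult_left_le)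
    ultimately show "\<exists>z. ((\<lambda>y. y powr \<alpha> - \<alpha>*y) has_real_derivative z) (at y) \<and> z \<le> 0" by blast
  qed
  thus ?thesis by (simp add: algebra_simps)
qed

lemma Fpos: assumes "0<e" "e<1" shows "0 < (\<alpha>-1)*(1-e^2) - 2*e^2 + (1+e)^2 * e powr \<alpha>"
proof -
  have l: "ln e \<ge> 1 - 1/e" using ln_le_minus_one[of "1/e"] assms by (simp add: ln_div)
  have "e powr (\<alpha>-1) = exp ((\<alpha>-1) * ln e)" using assms by (simp add: powr_def)
  also have "\<dots> \<ge> 1 + (\<alpha>-1) * ln e" by (rule exp_ge_add_one_self)
  finally have "e powr (\<alpha>-1) \<ge> 1 + (\<alpha>-1)*(1 - 1/e)"
    using l al by (smt (verit) mult_left_mono)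
  hence "e * e powr (\<alpha>-1) \<ge> e * (1 + (\<alpha>-1)*(1 - 1/e))" using assms by (simp add: mult_left_mono)
  moreover have "e * e powr (\<alpha>-1) = e powr \<alpha>" using assms by (simp add: powr_mult_base)
  moreover have "e * (1 + (\<alpha>-1)*(1 - 1/e)) = e - (\<alpha>-1)*(1-e)" using assms by (simp add: field_simps)
  ultimately have P: "e powr \<alpha> \<ge> e - (\<alpha>-1)*(1-e)" by simp
  have Pp: "e powr \<alpha> > 0" using assms by simp
  show ?thesis
  proof (cases "(\<alpha>-1)*(1-e^2) > 2*e^2")
    case True
    have "(1+e)^2 * e powr \<alpha> > 0" using Pp assms by simp
    thus ?thesis using True by linarith
  next
    case False
    have "(1+e)^2 * e powr \<alpha> \<ge> (1+e)^2 * (e - (\<alpha>-1)*(1-e))" using P by (simp add: mult_left_mono)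
    moreover have "(\<alpha>-1)*(1-e^2) - 2*e^2 + (1+e)^2 * (e - (\<alpha>-1)*(1-e)) = e*(1 + e^2 - (\<alpha>-1)*(1-e^2))"
      by (simp add: algebra_simps power2_eq_square)
    moreover have "e*(1 + e^2 - (\<alpha>-1)*(1-e^2)) > 0"
    proof -
      have "e*e < 1*1" using assms by (intro mult_strict_mono) auto
      hence "1 + e^2 - (\<alpha>-1)*(1-e^2) > 0" using False by (simp add: power2_eq_square)
      thus ?thesis using assms by simp
    qed
    ultimately show ?thesis by linarith
  qed
qed

lemma Sset_D: assumes "e \<in> Sset" shows "0 < e" "e < 1" "0 < sf e" "sf e < 1" "0 < uf e" "uf e < 1"
  "1 - \<alpha> * sf e \<le> uf e"
proof -
  show e: "0 < e" "e < 1" "sf e < 1" using assms by (auto simp: Sset_def)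
  show s: "0 < sf e" using e by (simp add: sf_def)
  show "0 < uf e" using e by (simp add: uf_def)
  have "(1 - sf e) powr \<alpha> < 1 powr \<alpha>" using e s al by (intro powr_less_mono2) auto
  thus "uf e < 1" by (simp add: uf_def)
  show "1 - \<alpha> * sf e \<le> uf e" using bern[of "1 - sf e"] e s unfolding uf_def by (simp add: algebra_simps)
qed

lemma sf_deriv: assumes "0 < e" shows "(sf has_real_derivative sd e) (at e)"
proof -
  have "((\<lambda>e. e powr \<alpha>) has_real_derivative \<alpha> * e powr (\<alpha>-1)) (at e)"
    by (rule has_real_derivative_powr[OF assms])
  from DERIV_mult[OF DERIV_add[OF DERIV_const[of 1] DERIV_ident] this]
  show ?thesis unfolding sf_def[abs_def] sd_def by (simp add: algebra_simps)
qed

lemma uf_deriv: assumes "e \<in> Sset" shows "(uf has_real_derivative (\<alpha> * (1 - sf e) powr (\<alpha>-1) * (- sd e))) (at e)"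
proof -
  have "((\<lambda>x. 1 - sf x) has_real_derivative (0 - sd e)) (at e)"
    using DERIV_diff[OF DERIV_const sf_deriv] Sset_D[OF assms] by blast
  from DERIV_fun_powr[OF this, of \<alpha>] Sset_D[OF assms]
  show ?thesis unfolding uf_def[abs_def] by simp
qed

lemma Lf_deriv: assumes "e \<in> Sset" shows "(Lf has_real_derivative Ld e) (at e)"
proof -
  note E = Sset_D[OF assms]
  define ud where "ud = \<alpha> * (1 - sf e) powr (\<alpha>-1) * (- sd e)"
  have d1: "((\<lambda>x. ln (1 - uf x)) has_real_derivative (0 - ud) / (1 - uf e)) (at e)"
  proof (rule my_ln)
    show "((\<lambda>x. 1 - uf x) has_real_derivative 0 - ud) (at e)"
      by (rule DERIV_diff[OF DERIV_const]) (use uf_deriv[OF assms] in \<open>simp add: ud_def\<close>)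
  qed (use E in simp)
  have d2: "((\<lambda>x. ln (1 - sf x)) has_real_derivative (0 - sd e) / (1 - sf e)) (at e)"
  proof (rule my_ln)
    show "((\<lambda>x. 1 - sf x) has_real_derivative 0 - sd e) (at e)"
      by (rule DERIV_diff[OF DERIV_const sf_deriv[OF E(1)]])
  qed (use E in simp)
  have d3: "((\<lambda>x. ln (1 - x)) has_real_derivative (0 - 1) / (1 - e)) (at e)"
  proof (rule my_ln)
    show "((\<lambda>x. 1 - x) has_real_derivative 0 - 1) (at e)"
      by (rule DERIV_diff[OF DERIV_const DERIV_ident])
  qed (use E in simp)
  have d4: "((\<lambda>x. ln x) has_real_derivative 1 / e) (at e)"
    using my_ln[OF DERIV_ident] E(1) by simp
  have D: "(Lf has_real_derivative ((0 - ud) / (1 - uf e) - \<alpha> * ((0 - sd e) / (1 - sf e)) + (0 - 1) / (1 - e) - 1/e)) (at e)"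
    unfolding Lf_def[abs_def]
    by (intro DERIV_diff DERIV_add DERIV_cmult d1 d2 d3 d4)
  have pw: "(1 - sf e) powr (\<alpha>-1) = uf e / (1 - sf e)"
    using E unfolding uf_def by (simp add: powr_diff)
  have "(0 - ud) / (1 - uf e) - \<alpha> * ((0 - sd e) / (1 - sf e)) + (0 - 1) / (1 - e) - 1/e = Ld e"
  proof -
    show ?thesis unfolding ud_def pw Ld_def using gen2[OF E(4,6,1,2)] by simp
  qed
  with D show ?thesis by simp
qed

lemma Ld_pos: assumes "e \<in> Sset" shows "Ld e > 0"
proof -
  note E = Sset_D[OF assms]
  define P where "P = e powr \<alpha>"
  have Pp: "P > 0" using E by (simp add: P_def)
  have eP: "e * e powr (\<alpha>-1) = P" using E by (simp add: powr_mult_base P_def)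
  have F: "0 < (\<alpha>-1)*(1-e^2) - 2*e^2 + (1+e)^2 * P" using Fpos[OF E(1,2)] by (simp add: P_def)
  have id: "(sd e * e)*(1-e) - sf e*(1 - sf e) = P * ((\<alpha>-1)*(1-e^2) - 2*e^2 + (1+e)^2 * P)"
  proof -
    have "sd e * e = P * e + (1+e)*\<alpha>*P" unfolding sd_def using eP[symmetric] by (simp add: P_def algebra_simps)
    thus ?thesis unfolding sf_def P_def[symmetric] by (simp add: algebra_simps power2_eq_square)
  qed
  have k1: "sf e*(1 - sf e) < (sd e * e)*(1-e)" using id F Pp by (smt (verit) mult_pos_pos)
  have k2: "(1 - sf e)*(1 - uf e) \<le> (1 - sf e) * (\<alpha> * sf e)" using E by (intro mult_left_mono) auto
  have k3: "(1 - sf e)*(1 - uf e) < \<alpha> * (sd e * e * (1-e))"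
  proof -
    have "(1 - sf e) * (\<alpha> * sf e) = \<alpha> * (sf e * (1 - sf e))" by simp
    also have "\<dots> < \<alpha> * (sd e * e * (1-e))" using k1 al by simp
    finally show ?thesis using k2 by linarith
  qed
  have pos: "(1 - sf e)*(1 - uf e) > 0" "e*(1-e) > 0" using E by auto
  have gen: "x / K - 1 / M = (x * M - K) / (K * M)" if "K > 0" "M > 0" for x K M :: real
    using that by (simp add: field_simps)
  have eq: "Ld e = (\<alpha> * (sd e * (e * (1 - e))) - (1 - sf e) * (1 - uf e)) / ((1 - sf e) * ((1 - uf e) * (e * (1 - e))))"
    unfolding Ld_def using gen[OF pos] by (simp add: mult.assoc)
  have num: "\<alpha> * (sd e * (e * (1 - e))) - (1 - sf e) * (1 - uf e) > 0" using k3 by (simp add: mult.assoc)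
  have den: "(1 - sf e) * ((1 - uf e) * (e * (1 - e))) > 0" using pos by (metis mult.assoc mult_pos_pos)
  show ?thesis unfolding eq by (rule divide_pos_pos[OF num den])
qed

definition Hf :: "real \<Rightarrow> real" where "Hf e = Lf e - ln (2 - exp (Lf e))"
definition Aset :: "real set" where "Aset = {e. e \<in> Sset \<and> qf e < 2}"

lemma sf_mono: assumes "0 < x" "x < y" shows "sf x < sf y"
proof -
  have "x powr \<alpha> < y powr \<alpha>" using assms al by (intro powr_less_mono2) auto
  thus ?thesis unfolding sf_def using assms by (intro mult_strict_mono) auto
qed

lemma Sset_between: assumes "x \<in> Sset" "y \<in> Sset" "x \<le> z" "z \<le> y" shows "z \<in> Sset"
proof -
  note X = Sset_D[OF assms(1)] and Y = Sset_D[OF assms(2)]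
  have "sf z \<le> sf y" using sf_mono[of z y] assms X by (cases "z = y") auto
  thus ?thesis using X Y assms unfolding Sset_def by auto
qed

lemma Lf_mono: assumes "x \<in> Sset" "y \<in> Sset" "x < y" shows "Lf x < Lf y"
proof (rule DERIV_pos_imp_increasing[OF assms(3)])
  fix z assume "x \<le> z" "z \<le> y"
  hence z: "z \<in> Sset" using Sset_between assms by blast
  show "\<exists>d. (Lf has_real_derivative d) (at z) \<and> d > 0" using Lf_deriv[OF z] Ld_pos[OF z] by blast
qed

lemma qf_exp: assumes "e \<in> Sset" shows "qf e = exp (Lf e)"
proof -
  note E = Sset_D[OF assms]
  have lu: "ln (uf e) = \<alpha> * ln (1 - sf e)" unfolding uf_def using E by simp
  have "exp (Lf e) = exp (ln (1 - uf e) - ln (uf e) + ln (1-e) - ln e)" unfolding Lf_def lu by simp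
  also have "\<dots> = (1 - uf e) / uf e * (1-e) / e" using E by (simp add: exp_diff exp_add)
  also have "\<dots> = qf e" unfolding qf_def by simp
  finally show ?thesis by simp
qed

lemma qf_less2: assumes "e \<in> Sset" shows "qf e < 2 \<longleftrightarrow> 1 - e < (1+e) * uf e"
proof -
  note E = Sset_D[OF assms]
  have "qf e < 2 \<longleftrightarrow> (1 - uf e)*(1-e) < 2 * (e * uf e)" unfolding qf_def using E
    by (simp add: pos_divide_less_eq)
  also have "\<dots> \<longleftrightarrow> 1 - e < (1+e) * uf e" by (simp add: algebra_simps)
  finally show ?thesis .
qed

definition Tf :: "real \<Rightarrow> real" where "Tf e = ln ((1+e)/(1-e))"
definition Ef :: "real \<Rightarrow> real" where "Ef t = (exp t - 1)/(exp t + 1)"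

lemma Tf_pos: assumes "0 < e" "e < 1" shows "0 < Tf e"
proof -
  have "1 < (1+e)/(1-e)" using assms by (simp add: less_divide_eq)
  thus ?thesis unfolding Tf_def by simp
qed

lemma Ef_Tf: assumes "0 < e" "e < 1" shows "Ef (Tf e) = e"
proof -
  have p: "(1+e)/(1-e) > 0" using assms by simp
  have "exp (Tf e) = (1+e)/(1-e)" unfolding Tf_def using p by simp
  moreover have "((1+e)/(1-e) - 1) / ((1+e)/(1-e) + 1) = e" using assms by (simp add: field_simps)
  ultimately show ?thesis unfolding Ef_def by simp
qed

lemma Ef_range: assumes "0 < t" shows "0 < Ef t \<and> Ef t < 1"
proof -
  have e1: "exp t > 1" using assms by simp
  have a: "exp t - 1 > 0" "exp t + 1 > 0" using e1 by linarith+
  have "(exp t - 1)/(exp t + 1) < 1" using a by (simp add: divide_less_eq)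
  thus ?thesis unfolding Ef_def using a by simp
qed

lemma Tf_Ef: "0 < t \<Longrightarrow> Tf (Ef t) = t"
proof -
  assume t: "0 < t"
  have g: "(1 + (x-1)/(x+1))/(1 - (x-1)/(x+1)) = x" if "x > 0" for x :: real
  proof -
    have "x + 1 > 0" using that by simp
    thus ?thesis by (simp add: field_simps)
  qed
  have "(1 + Ef t) / (1 - Ef t) = exp t" unfolding Ef_def using g[of "exp t"] by simp
  thus ?thesis unfolding Tf_def by simp
qed

lemma Tf_mono: assumes "0 < x" "x < y" "y < 1" shows "Tf x < Tf y"
proof -
  have p: "0 < 1-x" "0 < 1-y" using assms by auto
  have "(1+x)*(1-y) < (1+y)*(1-x)" using assms by (simp add: algebra_simps)
  hence "(1+x)/(1-x) < (1+y)/(1-y)" using p by (simp add: divide_less_eq less_divide_eq mult.commute)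
  thus ?thesis unfolding Tf_def using assms by simp
qed

lemma rorb_vals: assumes "a > 1"
  shows "a powr (\<alpha>-1) > 1" "rorb \<alpha> a 2 = -(a powr (\<alpha>-1) - 1)"
    "rorb \<alpha> a 3 = 1 - sf (a powr (\<alpha>-1) - 1)"
    "rorb \<alpha> a 4 = 1 - a powr (\<alpha>-1) * \<bar>1 - sf (a powr (\<alpha>-1) - 1)\<bar> powr \<alpha>"
proof -
  show b: "a powr (\<alpha>-1) > 1" using powr_less_mono[of 0 "\<alpha>-1" a] assms al by simp
  define b where "b = a powr (\<alpha>-1)"
  have b1: "b > 1" using b by (simp add: b_def)
  have r2: "rorb \<alpha> a 2 = 1 - b" unfolding rorb_def b_def by (simp add: eval_nat_numeral)
  show "rorb \<alpha> a 2 = -(a powr (\<alpha>-1) - 1)" using r2 by (simp add: b_def)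
  have r3: "rorb \<alpha> a 3 = 1 - b * \<bar>1 - b\<bar> powr \<alpha>" unfolding rorb_def b_def by (simp add: eval_nat_numeral)
  have "\<bar>1 - b\<bar> = b - 1" using b1 by simp
  hence "rorb \<alpha> a 3 = 1 - sf (b - 1)" using r3 unfolding sf_def by simp
  thus "rorb \<alpha> a 3 = 1 - sf (a powr (\<alpha>-1) - 1)" by (simp add: b_def)
  have "rorb \<alpha> a 4 = 1 - b * \<bar>rorb \<alpha> a 3\<bar> powr \<alpha>" unfolding rorb_def b_def by (simp add: eval_nat_numeral)
  thus "rorb \<alpha> a 4 = 1 - a powr (\<alpha>-1) * \<bar>1 - sf (a powr (\<alpha>-1) - 1)\<bar> powr \<alpha>"
    using \<open>rorb \<alpha> a 3 = 1 - sf (b - 1)\<close> by (simp add: b_def)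
qed

lemma rorb4_S: assumes "a > 1" "sf (a powr (\<alpha>-1) - 1) < 1"
  shows "rorb \<alpha> a 4 = 1 - (1 + (a powr (\<alpha>-1) - 1)) * uf (a powr (\<alpha>-1) - 1)"
  using rorb_vals(4)[OF assms(1)] assms(2) unfolding uf_def by simp

lemma adm_iff: "admissible \<alpha> a \<longleftrightarrow> a > 1 \<and> a powr (\<alpha>-1) - 1 \<in> Aset"
proof
  assume A: "admissible \<alpha> a"
  hence a1: "a > 1" unfolding admissible_def by simp
  define e where "e = a powr (\<alpha>-1) - 1"
  note R = rorb_vals[OF a1, folded e_def]
  have e0: "0 < e" using R(1) by (simp add: e_def)
  have e1: "e < 1" "sf e < 1" using A R unfolding admissible_def by auto
  hence S: "e \<in> Sset" using e0 by (simp add: Sset_def)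
  have r4: "rorb \<alpha> a 4 = 1 - (1+e) * uf e" using rorb4_S[OF a1] e1 by (simp add: e_def)
  have "1 - e < (1+e) * uf e" using A R r4 unfolding admissible_def by auto
  hence "qf e < 2" using qf_less2[OF S] by simp
  thus "a > 1 \<and> a powr (\<alpha>-1) - 1 \<in> Aset" using S a1 by (simp add: Aset_def e_def)
next
  assume A: "a > 1 \<and> a powr (\<alpha>-1) - 1 \<in> Aset"
  hence a1: "a > 1" by simp
  define e where "e = a powr (\<alpha>-1) - 1"
  note R = rorb_vals[OF a1, folded e_def]
  have S: "e \<in> Sset" and q: "qf e < 2" using A by (auto simp: Aset_def e_def)
  note E = Sset_D[OF S]
  have r4: "rorb \<alpha> a 4 = 1 - (1+e) * uf e" using rorb4_S[OF a1] E by (simp add: e_def)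
  have "1 - e < (1+e) * uf e" using qf_less2[OF S] q by simp
  moreover have "(1+e) * uf e < (1+e) * 1" using E by (intro mult_strict_left_mono) auto
  hence "(1+e) * uf e < 1+e" by simp
  hence "-e < 1 - (1+e) * uf e" by linarith
  ultimately show "admissible \<alpha> a" unfolding admissible_def R(2,3) r4 using E a1 by auto
qed

lemma tpar_eq: "a > 1 \<Longrightarrow> tpar \<alpha> a = Tf (a powr (\<alpha>-1) - 1)"
proof -
  assume a1: "a > 1"
  define e where "e = a powr (\<alpha>-1) - 1"
  have "(-e - 1)/(-1 - -e) = (-(1+e))/(-(1-e))" by (rule arg_cong2[where f="(/)"]) auto
  also have "\<dots> = (1+e)/(1-e)" by (rule minus_divide_divide)
  finally have "(-e - 1)/(-1 - -e) = (1+e)/(1-e)" .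
  thus ?thesis unfolding tpar_def poincare_def Tf_def rorb_vals(2)[OF a1, folded e_def] e_def[symmetric]
    by simp
qed

definition aof :: "real \<Rightarrow> real" where "aof e = (1+e) powr (1/(\<alpha>-1))"

lemma aof_prop: assumes "0 < e" shows "aof e > 1" "aof e powr (\<alpha>-1) - 1 = e"
proof -
  have "(1+e) powr (1/(\<alpha>-1)) > 1 powr (1/(\<alpha>-1))" using assms al by (intro powr_less_mono2) auto
  thus "aof e > 1" unfolding aof_def by simp
  have "aof e powr (\<alpha>-1) = (1+e) powr (1/(\<alpha>-1) * (\<alpha>-1))" unfolding aof_def by (simp add: powr_powr)
  also have "\<dots> = 1+e" using al assms by simp
  finally show "aof e powr (\<alpha>-1) - 1 = e" by simp
qed

lemma adm_aof: "e \<in> Aset \<Longrightarrow> admissible \<alpha> (aof e)"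
  using adm_iff aof_prop Sset_D by (auto simp: Aset_def)

lemma adm_unique: assumes "admissible \<alpha> a1" "admissible \<alpha> a2" "tpar \<alpha> a1 = tpar \<alpha> a2" shows "a1 = a2"
proof -
  have A1: "a1 > 1" "a1 powr (\<alpha>-1) - 1 \<in> Sset" and A2: "a2 > 1" "a2 powr (\<alpha>-1) - 1 \<in> Sset"
    using assms(1,2) adm_iff Aset_def by auto
  have "Tf (a1 powr (\<alpha>-1) - 1) = Tf (a2 powr (\<alpha>-1) - 1)" using assms(3) tpar_eq A1 A2 by simp
  hence "Ef (Tf (a1 powr (\<alpha>-1) - 1)) = Ef (Tf (a2 powr (\<alpha>-1) - 1))" by simp
  hence "a1 powr (\<alpha>-1) = a2 powr (\<alpha>-1)" using Ef_Tf Sset_D[OF A1(2)] Sset_D[OF A2(2)] by simp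
  hence "(a1 powr (\<alpha>-1)) powr (1/(\<alpha>-1)) = (a2 powr (\<alpha>-1)) powr (1/(\<alpha>-1))" by simp
  thus ?thesis using al A1 A2 by (simp add: powr_powr)
qed

lemma Tset_eq: "Tset \<alpha> = Tf ` Aset"
proof
  show "Tset \<alpha> \<subseteq> Tf ` Aset" unfolding Tset_def using adm_iff tpar_eq by auto
  show "Tf ` Aset \<subseteq> Tset \<alpha>"
  proof
    fix t assume "t \<in> Tf ` Aset"
    then obtain e where e: "e \<in> Aset" "t = Tf e" by auto
    have e0: "0 < e" using e Sset_D by (auto simp: Aset_def)
    have "tpar \<alpha> (aof e) = t" using tpar_eq[OF aof_prop(1)[OF e0]] aof_prop(2)[OF e0] e by simp
    thus "t \<in> Tset \<alpha>" unfolding Tset_def using adm_aof[OF e(1)] by auto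
  qed
qed

lemma apar_Tf: assumes "e \<in> Aset" shows "apar \<alpha> (Tf e) = aof e"
proof -
  have e0: "0 < e" using assms Sset_D by (auto simp: Aset_def)
  have tp: "tpar \<alpha> (aof e) = Tf e" using tpar_eq[OF aof_prop(1)[OF e0]] aof_prop(2)[OF e0] by simp
  show ?thesis unfolding apar_def
  proof (rule the_equality)
    show "admissible \<alpha> (aof e) \<and> tpar \<alpha> (aof e) = Tf e" using adm_aof[OF assms] tp by simp
    fix a assume "admissible \<alpha> a \<and> tpar \<alpha> a = Tf e"
    thus "a = aof e" using adm_unique adm_aof[OF assms] tp by metis
  qed
qed

lemma ident: fixes e u :: real assumes "0 < e" "e < 1" "0 < u" "1 - e < (1+e)*u"
  shows "(1+e)/(1-e) * ((1-u)*(1-e)/(e*u)) / (2 - (1-u)*(1-e)/(e*u)) = ((1 - (1+e)*u) + e) / (e - (1 - (1+e)*u))"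
proof -
  have n: "1 - e \<noteq> 0" "e*u \<noteq> 0" "2*(e*u) - (1-u)*(1-e) \<noteq> 0" using assms by (auto simp: algebra_simps)
  have g: "(A/B)*(N/M)/(2 - N/M) = A*N/(B*(2*M-N))" if "B \<noteq> 0" "M \<noteq> 0" "2*M-N \<noteq> 0" for A B N M :: real
  proof -
    have "2 - N/M = (2*M-N)/M" using that by (simp add: field_simps)
    thus ?thesis using that by simp
  qed
  have g2: "A*((1-u)*B)/(B*K) = A*(1-u)/K" if "B \<noteq> 0" for A B K :: real
    using that by simp
  have "(1+e)/(1-e) * ((1-u)*(1-e)/(e*u)) / (2 - (1-u)*(1-e)/(e*u)) = (1+e)*(1-u) / (2*(e*u) - (1-u)*(1-e))"
    using g[OF n] g2[of "1-e" "1+e" "2*(e*u) - (1-u)*(1-e)"] n by simp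
  also have "\<dots> = ((1 - (1+e)*u) + e) / (e - (1 - (1+e)*u))" by (simp add: algebra_simps)
  finally show ?thesis .
qed

lemma gfun_Tf: assumes "e \<in> Aset" shows "gfun \<alpha> (Tf e) = Tf e + Hf e"
proof -
  have S: "e \<in> Sset" and q2: "qf e < 2" using assms by (auto simp: Aset_def)
  note E = Sset_D[OF S]
  have a1: "aof e > 1" and ae: "aof e powr (\<alpha>-1) - 1 = e" using aof_prop E by auto
  have r2: "rorb \<alpha> (aof e) 2 = -e" using rorb_vals(2)[OF a1] ae by simp
  have r4: "rorb \<alpha> (aof e) 4 = 1 - (1+e) * uf e" using rorb4_S[OF a1] ae E by simp
  have ineq: "1 - e < (1+e) * uf e" using qf_less2[OF S] q2 by simp
  have qp: "qf e > 0" unfolding qf_def using E by simp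
  have L: "Lf e = ln (qf e)" using qf_exp[OF S] by simp
  have "Tf e + Hf e = ln ((1+e)/(1-e)) + ln (qf e) - ln (2 - qf e)"
    unfolding Tf_def Hf_def L using qp by simp
  also have "\<dots> = ln ((1+e)/(1-e) * qf e / (2 - qf e))" using E qp q2 by (simp add: ln_mult ln_div)
  also have "\<dots> = ln (((1 - (1+e)*uf e) + e) / (e - (1 - (1+e)*uf e)))"
    unfolding qf_def using ident[OF E(1,2,5) ineq] by simp
  finally have "Tf e + Hf e = ln (((1 - (1+e)*uf e) + e) / (e - (1 - (1+e)*uf e)))" .
  thus ?thesis unfolding gfun_def Let_def apar_Tf[OF assms] r2 r4 poincare_def by simp
qed

lemma Aset_S: "e \<in> Aset \<Longrightarrow> e \<in> Sset" by (simp add: Aset_def)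

lemma Aset_exp: "e \<in> Aset \<Longrightarrow> exp (Lf e) < 2" using qf_exp by (auto simp: Aset_def)

lemma Hf_mono: assumes "x \<in> Aset" "y \<in> Aset" "x < y" shows "Hf x < Hf y"
proof -
  have L: "Lf x < Lf y" using Lf_mono Aset_S assms by blast
  hence "exp (Lf x) < exp (Lf y)" by simp
  moreover have "exp (Lf y) < 2" using Aset_exp[OF assms(2)] .
  ultimately have a: "0 < 2 - exp (Lf y)" "2 - exp (Lf y) < 2 - exp (Lf x)" by linarith+
  have b: "0 < 2 - exp (Lf x)" using a by linarith
  have "ln (2 - exp (Lf y)) < ln (2 - exp (Lf x))"
    using ln_less_cancel_iff[of "2 - exp (Lf y)" "2 - exp (Lf x)"] a b by blast
  thus ?thesis unfolding Hf_def using L by simp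
qed

lemma Aset_down: assumes "x \<in> Sset" "y \<in> Aset" "x \<le> y" shows "x \<in> Aset"
proof -
  have "Lf x \<le> Lf y" using Lf_mono[OF assms(1) Aset_S[OF assms(2)]] assms(3) by (cases "x = y") auto
  hence "exp (Lf x) \<le> exp (Lf y)" by simp
  hence "exp (Lf x) < 2" using Aset_exp[OF assms(2)] by linarith
  thus ?thesis using assms(1) qf_exp[OF assms(1)] by (simp add: Aset_def)
qed

lemma Gam_mono: assumes "x \<in> Aset" "y \<in> Aset" "x < y" shows "Tf x + Hf x < Tf y + Hf y"
proof -
  have "Tf x < Tf y" using Tf_mono[OF Sset_D(1)[OF Aset_S[OF assms(1)]] assms(3) Sset_D(2)[OF Aset_S[OF assms(2)]]] .
  thus ?thesis using Hf_mono[OF assms] by simp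
qed

lemma Hf_deriv: assumes "e \<in> Aset"
  shows "(Hf has_real_derivative (Ld e - (0 - exp (Lf e) * Ld e) / (2 - exp (Lf e)))) (at e)"
    "Ld e - (0 - exp (Lf e) * Ld e) / (2 - exp (Lf e)) > 0"
proof -
  have S: "e \<in> Sset" using Aset_S[OF assms] .
  have d: "((\<lambda>x. exp (Lf x)) has_real_derivative exp (Lf e) * Ld e) (at e)"
    using DERIV_chain2[OF DERIV_exp Lf_deriv[OF S]] by simp
  have d2: "((\<lambda>x. 2 - exp (Lf x)) has_real_derivative 0 - exp (Lf e) * Ld e) (at e)"
    by (rule DERIV_diff[OF DERIV_const d])
  have d3: "((\<lambda>x. ln (2 - exp (Lf x))) has_real_derivative (0 - exp (Lf e) * Ld e) / (2 - exp (Lf e))) (at e)"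
    by (rule my_ln[OF d2]) (use Aset_exp[OF assms] in simp)
  show "(Hf has_real_derivative (Ld e - (0 - exp (Lf e) * Ld e) / (2 - exp (Lf e)))) (at e)"
    unfolding Hf_def[abs_def] by (rule DERIV_diff[OF Lf_deriv[OF S] d3])
  have "exp (Lf e) * Ld e / (2 - exp (Lf e)) > 0" using Ld_pos[OF S] Aset_exp[OF assms] by simp
  thus "Ld e - (0 - exp (Lf e) * Ld e) / (2 - exp (Lf e)) > 0" using Ld_pos[OF S] by simp
qed

lemma Tf_cont: "0 < e \<Longrightarrow> e < 1 \<Longrightarrow> isCont Tf e"
  unfolding Tf_def[abs_def] by (intro continuous_intros) auto

lemma Gam_cont: assumes "e \<in> Aset" shows "isCont (\<lambda>x. Tf x + Hf x) e"
proof -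
  have "isCont Tf e" using Tf_cont Sset_D[OF Aset_S[OF assms]] by blast
  moreover have "isCont Hf e" using DERIV_isCont[OF Hf_deriv(1)[OF assms]] .
  ultimately show ?thesis by (rule isCont_add)
qed

lemma Lf_cont: "e \<in> Sset \<Longrightarrow> isCont Lf e"
  using DERIV_isCont[OF Lf_deriv] .

lemma sf_cont: "0 < e \<Longrightarrow> isCont sf e"
  using DERIV_isCont[OF sf_deriv] .

lemma small_q: assumes "c > 0" shows "\<exists>e \<in> Sset. e \<le> 1/2 \<and> qf e < c"
proof -
  define v where "v = (1/2::real) powr \<alpha>"
  have v0: "v > 0" by (simp add: v_def)
  define K where "K = 4 * \<alpha> / v"
  have K0: "K > 0" using al v0 by (simp add: K_def)
  define e where "e = min (1/3) ((c/K) powr (1/(\<alpha>-1)))"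
  have e0: "e > 0" using assms K0 by (simp add: e_def)
  have e3: "e \<le> 1/3" by (simp add: e_def)
  have P1: "e powr (\<alpha>-1) \<le> c/K"
  proof -
    have "e powr (\<alpha>-1) \<le> ((c/K) powr (1/(\<alpha>-1))) powr (\<alpha>-1)"
      using e0 al by (intro powr_mono2) (auto simp: e_def)
    also have "\<dots> = c/K" using al assms K0 by (simp add: powr_powr)
    finally show ?thesis .
  qed
  have epa: "e powr \<alpha> = e * e powr (\<alpha>-1)" using e0 by (simp add: powr_mult_base)
  have pa_le: "e powr \<alpha> \<le> e" using e0 e3 al by (intro powr_le_one_le) auto
  have s_le: "sf e \<le> 1/2"
  proof -
    have "sf e \<le> (1+e) * e" unfolding sf_def using pa_le e0 by (intro mult_left_mono) auto
    also have "\<dots> \<le> (4/3) * (1/3)" by (rule mult_mono) (use e0 e3 in auto)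
    finally show ?thesis by simp
  qed
  have S: "e \<in> Sset" using e0 e3 s_le by (simp add: Sset_def)
  note E = Sset_D[OF S]
  have uv: "v \<le> uf e" unfolding uf_def v_def using s_le al by (intro powr_mono2) auto
  have n1: "(1 - uf e) * (1-e) \<le> (\<alpha> * sf e) * 1"
    by (rule mult_mono) (use E in auto)
  have d1: "0 < e * uf e" using E by simp
  have st1: "qf e \<le> (\<alpha> * sf e) / (e * uf e)"
    unfolding qf_def using divide_right_mono[OF n1, of "e * uf e"] d1 by simp
  have st2: "(\<alpha> * sf e) / (e * uf e) \<le> (\<alpha> * sf e) / (e * v)"
    by (rule divide_left_mono) (use E e0 v0 uv al in \<open>auto intro!: mult_left_mono mult_pos_pos\<close>)
  have st3: "(\<alpha> * sf e) / (e * v) = (\<alpha> * ((1+e) * e powr (\<alpha>-1))) / v"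
    unfolding sf_def epa using e0 by simp
  have n4: "(1+e) * e powr (\<alpha>-1) \<le> 2 * (c/K)"
    by (rule mult_mono) (use e3 P1 assms K0 in auto)
  have n5: "\<alpha> * ((1+e) * e powr (\<alpha>-1)) \<le> \<alpha> * (2 * (c/K))"
    by (rule mult_left_mono[OF n4]) (use al in simp)
  have st4: "(\<alpha> * ((1+e) * e powr (\<alpha>-1))) / v \<le> (\<alpha> * (2 * (c/K))) / v"
    by (rule divide_right_mono[OF n5]) (use v0 in simp)
  have st5: "(\<alpha> * (2 * (c/K))) / v = c/2" using al v0 by (simp add: K_def field_simps)
  have "qf e \<le> c/2" using st1 st2 st3 st4 st5 by linarith
  hence "qf e < c" using assms by linarith
  moreover have "e \<le> 1/2" using e3 by simp
  ultimately show ?thesis using S by blast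
qed

lemma big_q: "\<exists>e \<in> Sset. \<not> qf e < 2"
proof -
  have cs: "continuous_on {a..b} sf" if "0 < a" for a b
    using sf_cont that by (intro continuous_at_imp_continuous_on) auto
  have s4: "sf (1/4) < 1"
  proof -
    have "(1/4::real) powr \<alpha> \<le> 1/4" using al by (intro powr_le_one_le) auto
    hence "sf (1/4) \<le> (5/4) * (1/4)" unfolding sf_def by simp
    thus ?thesis by simp
  qed
  have s1: "sf 1 = 2" by (simp add: sf_def)
  have "\<exists>x. 1/4 \<le> x \<and> x \<le> 1 \<and> sf x = 1"
    by (rule IVT'[of sf]) (use s4 s1 cs[of "1/4" 1] in simp_all)
  then obtain e0 where e0: "1/4 \<le> e0" "e0 \<le> 1" "sf e0 = 1" by blast
  have e01: "e0 < 1" using e0 s1 by (cases "e0 = 1") auto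
  define \<delta> where "\<delta> = (1-e0)/(1+e0)"
  have p: "0 < 1 - e0" "0 < 1 + e0" using e0 e01 by auto
  have d0: "0 < \<delta>" "\<delta> < 1" unfolding \<delta>_def using p e0 by (simp_all add: divide_less_eq)
  define el where "el = (1-\<delta>)/2"
  have el0: "0 < el" "el \<le> 1/2" using d0 by (auto simp: el_def)
  have sel: "sf el \<le> 1 - \<delta>"
  proof -
    have "el powr \<alpha> \<le> el" using el0 al by (intro powr_le_one_le) auto
    hence "sf el \<le> (1+el) * el" unfolding sf_def using el0 by (intro mult_left_mono) auto
    also have "\<dots> \<le> 2 * el" using el0 by (intro mult_right_mono) auto
    finally show ?thesis by (simp add: el_def)
  qed
  have ele: "el \<le> e0"
  proof (rule ccontr)
    assume "\<not> el \<le> e0"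
    hence "sf e0 < sf el" using sf_mono[of e0 el] e0 by simp
    thus False using sel e0 d0 by simp
  qed
  have "\<exists>x. el \<le> x \<and> x \<le> e0 \<and> sf x = 1 - \<delta>"
    by (rule IVT'[of sf]) (use sel e0 d0 ele cs[OF el0(1), of e0] in simp_all)
  then obtain e3 where e3: "el \<le> e3" "e3 \<le> e0" "sf e3 = 1 - \<delta>" by blast
  have S: "e3 \<in> Sset" using e3 el0 e01 d0 by (simp add: Sset_def)
  have u: "uf e3 = \<delta> powr \<alpha>" by (simp add: uf_def e3)
  have ud: "uf e3 \<le> \<delta>" unfolding u using d0 al by (intro powr_le_one_le) auto
  have "\<delta> * (1+e3) \<le> 1 - e3"
  proof -
    have "(1-e0)*(1+e3) \<le> (1-e3)*(1+e0)" using e3 by (simp add: algebra_simps)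
    thus ?thesis unfolding \<delta>_def using e0 by (simp add: divide_le_eq mult.commute)
  qed
  moreover have "(1+e3) * uf e3 \<le> (1+e3) * \<delta>" using ud e3 el0 by (intro mult_left_mono) auto
  ultimately have "\<not> 1 - e3 < (1+e3) * uf e3" by (simp add: mult.commute)
  thus ?thesis using qf_less2[OF S] S by blast
qed

lemma Tset_pos: "Tset \<alpha> \<subseteq> {0<..}"
  unfolding Tset_eq using Tf_pos Sset_D Aset_S by fastforce

lemma Tset_char: assumes "t \<in> Tset \<alpha>"
  shows "0 < t" "Ef t \<in> Aset" "Tf (Ef t) = t" "gfun \<alpha> t = t + Hf (Ef t)"
proof -
  obtain e where e: "e \<in> Aset" "t = Tf e" using assms unfolding Tset_eq by auto
  have S: "e \<in> Sset" using Aset_S[OF e(1)] .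
  have Ee: "Ef t = e" using e(2) Ef_Tf Sset_D(1,2)[OF S] by simp
  show "0 < t" using e(2) Tf_pos Sset_D(1,2)[OF S] by simp
  show "Ef t \<in> Aset" using Ee e by simp
  show "Tf (Ef t) = t" using Ee e by simp
  show "gfun \<alpha> t = t + Hf (Ef t)" using gfun_Tf[OF e(1)] Ee e(2) by simp
qed

lemma gfun_mono: assumes "t1 \<in> Tset \<alpha>" "t2 \<in> Tset \<alpha>" "t1 < t2" shows "gfun \<alpha> t1 < gfun \<alpha> t2"
proof -
  note C1 = Tset_char[OF assms(1)] and C2 = Tset_char[OF assms(2)]
  have "Ef t1 < Ef t2"
  proof (rule ccontr)
    assume "\<not> Ef t1 < Ef t2"
    hence "Ef t2 \<le> Ef t1" by simp
    moreover have "Ef t2 \<noteq> Ef t1"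
    proof
      assume "Ef t2 = Ef t1"
      hence "Tf (Ef t2) = Tf (Ef t1)" by simp
      thus False using C1(3) C2(3) assms(3) by simp
    qed
    ultimately have "Ef t2 < Ef t1" by simp
    hence "Tf (Ef t2) < Tf (Ef t1)"
      using Tf_mono Sset_D(1,2)[OF Aset_S[OF C1(2)]] Sset_D(1,2)[OF Aset_S[OF C2(2)]] by blast
    thus False using C1(3) C2(3) assms(3) by simp
  qed
  hence "Tf (Ef t1) + Hf (Ef t1) < Tf (Ef t2) + Hf (Ef t2)" using Gam_mono C1(2) C2(2) by blast
  thus ?thesis using C1 C2 by simp
qed

lemma gfun_surj: "\<exists>t \<in> Tset \<alpha>. gfun \<alpha> t = y"
proof -
  define c1 where "c1 = min 1 (exp (y - ln 3))"
  have c10: "c1 > 0" "c1 \<le> 1" "c1 \<le> exp (y - ln 3)" by (auto simp: c1_def)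
  obtain e1 where e1: "e1 \<in> Sset" "e1 \<le> 1/2" "qf e1 < c1" using small_q[OF c10(1)] by blast
  note E1 = Sset_D[OF e1(1)]
  have A1: "e1 \<in> Aset" using e1 c10 by (simp add: Aset_def)
  have q1: "exp (Lf e1) = qf e1" using qf_exp[OF e1(1)] by simp
  have qp1: "qf e1 > 0" unfolding qf_def using E1 by simp
  have T1: "Tf e1 \<le> ln 3"
  proof -
    have "(1+e1)/(1-e1) \<le> 3" using E1 e1(2) by (simp add: divide_le_eq)
    moreover have "(1+e1)/(1-e1) > 0" using E1 by simp
    ultimately show ?thesis unfolding Tf_def by simp
  qed
  have H1: "Hf e1 < y - ln 3"
  proof -
    have "ln (2 - exp (Lf e1)) > 0" using q1 e1(3) c10 by simp
    moreover have "Lf e1 = ln (qf e1)" using q1 by (metis ln_exp)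
    moreover have "ln (qf e1) < ln c1" using qp1 e1(3) by simp
    moreover have "ln c1 \<le> y - ln 3" using c10 by (metis ln_exp ln_le_cancel_iff exp_gt_zero)
    ultimately show ?thesis unfolding Hf_def by linarith
  qed
  have G1: "Tf e1 + Hf e1 \<le> y" using T1 H1 by simp
  obtain e3 where e3: "e3 \<in> Sset" "\<not> qf e3 < 2" using big_q by blast
  define z where "z = max y 0"
  define c2 where "c2 = 2 * exp z / (1 + exp z)"
  have ez: "exp z \<ge> 1" by (simp add: z_def)
  have pz: "0 < 1 + exp z" using ez by linarith
  have c2b: "1 \<le> c2" "c2 < 2" using ez pz by (simp_all add: c2_def divide_less_eq le_divide_eq)
  have e13: "e1 < e3"
  proof (rule ccontr)
    assume "\<not> e1 < e3"
    hence "Lf e3 \<le> Lf e1" using Lf_mono[OF e3(1) e1(1)] by (cases "e3 = e1") auto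
    hence "exp (Lf e3) \<le> exp (Lf e1)" by simp
    thus False using qf_exp[OF e3(1)] q1 e3(2) e1(3) c10 by simp
  qed
  have ce: "continuous_on {e1..e3} (\<lambda>x. exp (Lf x))"
  proof (rule continuous_at_imp_continuous_on, safe)
    fix x assume "x \<in> {e1..e3}"
    hence "x \<in> Sset" using Sset_between[OF e1(1) e3(1)] by auto
    thus "isCont (\<lambda>x. exp (Lf x)) x" using Lf_cont by (intro continuous_intros) auto
  qed
  have "\<exists>x. e1 \<le> x \<and> x \<le> e3 \<and> exp (Lf x) = c2"
  proof (rule IVT'[OF _ _ _ ce])
    show "exp (Lf e1) \<le> c2" using q1 e1(3) c10 c2b by simp
    show "c2 \<le> exp (Lf e3)" using qf_exp[OF e3(1)] e3(2) c2b by simp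
    show "e1 \<le> e3" using e13 by simp
  qed
  then obtain e2 where e2: "e1 \<le> e2" "e2 \<le> e3" "exp (Lf e2) = c2" by blast
  have S2: "e2 \<in> Sset" using Sset_between[OF e1(1) e3(1) e2(1,2)] .
  have A2: "e2 \<in> Aset" using S2 qf_exp[OF S2] e2(3) c2b by (simp add: Aset_def)
  have H2: "Hf e2 = z"
  proof -
    have p: "1 + exp z > 0" by (smt (verit) exp_gt_zero)
    have "c2 / (2 - c2) = exp z" unfolding c2_def using p by (simp add: field_simps)
    moreover have "Lf e2 = ln c2" using e2(3) by (metis ln_exp)
    moreover have "ln c2 - ln (2 - c2) = ln (c2 / (2 - c2))" using c2b by (simp add: ln_div)
    ultimately show ?thesis unfolding Hf_def e2(3) by simp
  qed
  have G2: "y \<le> Tf e2 + Hf e2"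
    using H2 Tf_pos Sset_D(1,2)[OF S2] by (simp add: z_def) (smt (verit))
  have cg: "continuous_on {e1..e2} (\<lambda>x. Tf x + Hf x)"
  proof (rule continuous_at_imp_continuous_on, safe)
    fix x assume x: "x \<in> {e1..e2}"
    hence "x \<in> Sset" using Sset_between[OF e1(1) S2] by auto
    hence "x \<in> Aset" using Aset_down[OF _ A2] x by auto
    thus "isCont (\<lambda>x. Tf x + Hf x) x" by (rule Gam_cont)
  qed
  have "\<exists>x. e1 \<le> x \<and> x \<le> e2 \<and> Tf x + Hf x = y" by (rule IVT'[OF G1 G2 e2(1) cg])
  then obtain e where e: "e1 \<le> e" "e \<le> e2" "Tf e + Hf e = y" by blast
  have "e \<in> Sset" using Sset_between[OF e1(1) S2 e(1,2)] .
  hence A: "e \<in> Aset" using Aset_down[OF _ A2 e(2)] by simp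
  have "Tf e \<in> Tset \<alpha>" unfolding Tset_eq using A by simp
  moreover have "gfun \<alpha> (Tf e) = y" using gfun_Tf[OF A] e(3) by simp
  ultimately show ?thesis by blast
qed

lemma Ef_cont: "isCont Ef t"
proof -
  have "exp t + 1 \<noteq> 0" by (smt (verit) exp_gt_zero)
  thus ?thesis unfolding Ef_def[abs_def] by (intro continuous_intros) auto
qed

lemma Ef_deriv: "\<exists>d. (Ef has_real_derivative d) (at t) \<and> d > 0"
proof -
  have p: "exp t + 1 \<noteq> 0" "exp t + 1 > 0" by (smt (verit) exp_gt_zero)+
  have D: "(Ef has_real_derivative ((exp t - 0) * (exp t + 1) - (exp t - 1) * (exp t + 0)) / ((exp t + 1) * (exp t + 1))) (at t)"
    unfolding Ef_def[abs_def]
    by (rule DERIV_divide[OF DERIV_diff[OF DERIV_exp DERIV_const] DERIV_add[OF DERIV_exp DERIV_const] p(1)])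
  have "(exp t - 0) * (exp t + 1) - (exp t - 1) * (exp t + 0) = 2 * exp t" by (simp add: algebra_simps)
  hence "((exp t - 0) * (exp t + 1) - (exp t - 1) * (exp t + 0)) / ((exp t + 1) * (exp t + 1)) > 0"
    using p by simp
  thus ?thesis using D by blast
qed

lemma gfun_deriv: assumes "t \<in> Tset \<alpha>" shows "\<exists>D. (gfun \<alpha> has_real_derivative D) (at t) \<and> D > 1"
proof -
  note C = Tset_char[OF assms]
  define e where "e = Ef t"
  have A: "e \<in> Aset" using C by (simp add: e_def)
  have S: "e \<in> Sset" using Aset_S[OF A] .
  note E = Sset_D[OF S]
  obtain d where d: "(Ef has_real_derivative d) (at t)" "d > 0" using Ef_deriv by blast
  define hd where "hd = Ld e - (0 - exp (Lf e) * Ld e) / (2 - exp (Lf e))"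
  have hd: "(Hf has_real_derivative hd) (at (Ef t))" "hd > 0" using Hf_deriv[OF A] by (simp_all add: hd_def e_def)
  have Dh: "((\<lambda>x. x + Hf (Ef x)) has_real_derivative 1 + hd * d) (at t)"
    by (rule DERIV_add[OF DERIV_ident DERIV_chain2[OF hd(1) d(1)]])
  have ev1: "eventually (\<lambda>x. 0 < x) (nhds t)" by (rule ev_gt[where f="\<lambda>x. x" and c=0]) (use C(1) in auto)
  have ev2: "eventually (\<lambda>x. sf (Ef x) < 1) (nhds t)"
    by (rule ev_lt) (use isCont_o2[OF Ef_cont sf_cont] E e_def in auto)
  have ce: "isCont (\<lambda>x. exp (Lf x)) e" using Lf_cont[OF S] by (intro continuous_intros)
  have ev3: "eventually (\<lambda>x. exp (Lf (Ef x)) < 2) (nhds t)"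
    by (rule ev_lt) (use isCont_o2[OF Ef_cont, of t "\<lambda>x. exp (Lf x)"] ce Aset_exp[OF A] e_def in auto)
  have ev: "eventually (\<lambda>x. gfun \<alpha> x = x + Hf (Ef x)) (nhds t)"
    using ev1 ev2 ev3
  proof eventually_elim
    case (elim x)
    have r: "0 < Ef x" "Ef x < 1" using Ef_range[OF elim(1)] by auto
    have Sx: "Ef x \<in> Sset" using r elim(2) by (simp add: Sset_def)
    have Ax: "Ef x \<in> Aset" using Sx qf_exp[OF Sx] elim(3) by (simp add: Aset_def)
    have "gfun \<alpha> (Tf (Ef x)) = Tf (Ef x) + Hf (Ef x)" by (rule gfun_Tf[OF Ax])
    thus ?case using Tf_Ef[OF elim(1)] by simp
  qed
  have "(gfun \<alpha> has_real_derivative 1 + hd * d) (at t)"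
    using DERIV_cong_ev[OF refl ev refl] Dh by simp
  moreover have "1 + hd * d > 1" using hd(2) d(2) by simp
  ultimately show ?thesis by blast
qed

lemma gfun_tpar: assumes "admissible \<alpha> a"
  shows "gfun \<alpha> (tpar \<alpha> a) = poincare (rorb \<alpha> a 2) (- rorb \<alpha> a 2) (rorb \<alpha> a 4)"
proof -
  have "apar \<alpha> (tpar \<alpha> a) = a" unfolding apar_def
    by (rule the_equality) (use assms adm_unique in auto)
  thus ?thesis unfolding gfun_def Let_def by simp
qed

lemma gfun_inj: "inj_on (gfun \<alpha>) (Tset \<alpha>)"
proof (rule inj_onI)
  fix x y assume xy: "x \<in> Tset \<alpha>" "y \<in> Tset \<alpha>" "gfun \<alpha> x = gfun \<alpha> y"
  show "x = y"
  proof (rule ccontr)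
    assume "x \<noteq> y"
    hence "x < y \<or> y < x" by auto
    thus False using gfun_mono xy by force
  qed
qed

lemma unique4: "\<exists>!a. admissible \<alpha> a \<and> rorb \<alpha> a 4 = 0"
proof -
  have zero: "gfun \<alpha> (tpar \<alpha> a) = 0" if "admissible \<alpha> a" "rorb \<alpha> a 4 = 0" for a
  proof -
    have "rorb \<alpha> a 2 < 0" using that(1) unfolding admissible_def by simp
    hence "(0 - rorb \<alpha> a 2) / (- rorb \<alpha> a 2 - 0) = 1" by simp
    thus ?thesis using gfun_tpar[OF that(1)] that(2) unfolding poincare_def by simp
  qed
  obtain t where t: "t \<in> Tset \<alpha>" "gfun \<alpha> t = 0" using gfun_surj by blast
  then obtain a where a: "admissible \<alpha> a" "t = tpar \<alpha> a" unfolding Tset_def by auto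
  have ex: "rorb \<alpha> a 4 = 0"
  proof -
    define x2 where "x2 = rorb \<alpha> a 2"
    define x4 where "x4 = rorb \<alpha> a 4"
    have b: "x2 < x4" "x4 < - x2" using a(1) unfolding admissible_def x2_def x4_def by auto
    have "ln ((x4 - x2) / (- x2 - x4)) = 0" using gfun_tpar[OF a(1)] t(2) a(2)
      unfolding poincare_def x2_def x4_def by simp
    moreover have "(x4 - x2) / (- x2 - x4) > 0" using b by simp
    ultimately have "(x4 - x2) / (- x2 - x4) = 1" by simp
    hence "x4 - x2 = - x2 - x4" using b by (simp add: divide_eq_1_iff)
    thus ?thesis unfolding x4_def by simp
  qed
  show ?thesis
  proof (rule ex1I[of _ a])
    show "admissible \<alpha> a \<and> rorb \<alpha> a 4 = 0" using a ex by simp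
    fix b assume b: "admissible \<alpha> b \<and> rorb \<alpha> b 4 = 0"
    have "tpar \<alpha> b \<in> Tset \<alpha>" "tpar \<alpha> a \<in> Tset \<alpha>" unfolding Tset_def using a b by auto
    moreover have "gfun \<alpha> (tpar \<alpha> b) = gfun \<alpha> (tpar \<alpha> a)" using zero a ex b by simp
    ultimately have "tpar \<alpha> b = tpar \<alpha> a" using gfun_inj by (meson inj_onD)
    thus "b = a" using adm_unique a(1) b by blast
  qed
qed

end

theorem theorem3p1:
  fixes \<alpha> :: real
  assumes "\<alpha> > 1"
  shows "Tset \<alpha> \<subseteq> {0<..}
    \<and> bij_betw (gfun \<alpha>) (Tset \<alpha>) (UNIV :: real set)
    \<and> strict_mono_on UNIV (the_inv_into (Tset \<alpha>) (gfun \<alpha>))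
    \<and> (\<forall>t \<in> Tset \<alpha>. \<exists>D. (gfun \<alpha> has_real_derivative D) (at t) \<and> D > 1)
    \<and> (\<exists>!a. admissible \<alpha> a \<and> rorb \<alpha> a 4 = 0)"
proof -
  have inj: "inj_on (gfun \<alpha>) (Tset \<alpha>)" by (rule gfun_inj[OF assms])
  have img: "gfun \<alpha> ` Tset \<alpha> = UNIV"
  proof -
    have "y \<in> gfun \<alpha> ` Tset \<alpha>" for y
    proof -
      obtain t where "t \<in> Tset \<alpha>" "gfun \<alpha> t = y" using gfun_surj[OF assms, of y] by blast
      thus ?thesis by (metis imageI)
    qed
    thus ?thesis by auto
  qed
  have bij: "bij_betw (gfun \<alpha>) (Tset \<alpha>) UNIV" using inj img by (simp add: bij_betw_def)
  have sm: "strict_mono_on UNIV (the_inv_into (Tset \<alpha>) (gfun \<alpha>))"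
  proof (rule strict_mono_onI)
    fix r s :: real assume rs: "r < s"
    define x where "x = the_inv_into (Tset \<alpha>) (gfun \<alpha>) r"
    define y where "y = the_inv_into (Tset \<alpha>) (gfun \<alpha>) s"
    have xT: "x \<in> Tset \<alpha>" "gfun \<alpha> x = r" unfolding x_def
      using the_inv_into_into[OF inj, of r] f_the_inv_into_f[OF inj, of r] img by auto
    have yT: "y \<in> Tset \<alpha>" "gfun \<alpha> y = s" unfolding y_def
      using the_inv_into_into[OF inj, of s] f_the_inv_into_f[OF inj, of s] img by auto
    show "the_inv_into (Tset \<alpha>) (gfun \<alpha>) r < the_inv_into (Tset \<alpha>) (gfun \<alpha>) s"
      unfolding x_def[symmetric] y_def[symmetric]
    proof (rule ccontr)
      assume "\<not> x < y"
      hence "y < x \<or> y = x" by auto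
      thus False using gfun_mono[OF assms yT(1) xT(1)] xT yT rs by auto
    qed
  qed
  show ?thesis using Tset_pos[OF assms] bij sm gfun_deriv[OF assms] unique4[OF assms] by blast
qed
end
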